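(* Let $X, Y, Z, W$ be Polish spaces, let $P: X \rightsquigarrow Y$ and $Q: Y \rightsquigarrow Z$ be tight Feller kernels, and let $S \subseteq Z \times W$ be closed. For risk budgets $\delta, \epsilon \ge 0$ with $\delta + \epsilon < 1$, $$P^{*,\delta}(Q^{*,\epsilon} S) \subseteq (Q \circ P)^{*,\delta+\epsilon} S.$$
   Context: A Markov kernel $P: X \rightsquigarrow Y$ assigns to each $x$ a Borel probability measure $P(x,\cdot)$ on $Y$ with $x \mapsto P(x,A)$ measurable for each Borel $A$. It is Feller if $x \mapsto \int \phi(y)\,P(x,dy)$ is continuous for every bounded continuous $\phi$, and tight if for every compact $K \subseteq X$ and $\eta > 0$ there is a compact $L \subseteq Y$ with $P(x,L) \ge 1-\eta$ for all $x \in K$. Composition: $(Q \circ P)(x,C) = \int_Y Q(y,C)\,P(x,dy)$. For a relation $S \subseteq Y \times Z$ and $\epsilon \in [0,1)$, the $\epsilon$-pullback along $P$ is $P^{*,\epsilon} S = \{(x,z) \in X \times Z : P(x, S_z) \ge 1-\epsilon\}$, where $S_z = \{y : (y,z) \in S\}$. *)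

theory Defs
  imports "HOL-Probability.Probability"
begin

definition markov_kernel :: "('a::topological_space \<Rightarrow> 'b::topological_space measure) \<Rightarrow> bool" where
  "markov_kernel P \<longleftrightarrow>
     (\<forall>x. prob_space (P x) \<and> sets (P x) = sets borel) \<and>
     (\<forall>A \<in> sets borel. (\<lambda>x. measure (P x) A) \<in> borel_measurable borel)"

definition feller :: "('a::topological_space \<Rightarrow> 'b::metric_space measure) \<Rightarrow> bool" where
  "feller P \<longleftrightarrow>
     (\<forall>\<phi> :: 'b \<Rightarrow> real. continuous_on UNIV \<phi> \<and> bounded (range \<phi>) \<longrightarrow>
        continuous_on UNIV (\<lambda>x. \<integral>y. \<phi> y \<partial>(P x)))"

definition tight_kernel :: "('a::topological_space \<Rightarrow> 'b::topological_space measure) \<Rightarrow> bool" where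
  "tight_kernel P \<longleftrightarrow>
     (\<forall>K. compact K \<longrightarrow> (\<forall>\<eta>>0. \<exists>L. compact L \<and> (\<forall>x\<in>K. measure (P x) L \<ge> 1 - \<eta>)))"

definition kcomp :: "('b \<Rightarrow> 'c::topological_space measure) \<Rightarrow> ('a \<Rightarrow> 'b measure) \<Rightarrow> 'a \<Rightarrow> 'c measure" where
  "kcomp Q P x = measure_of UNIV (sets borel) (\<lambda>C. \<integral>\<^sup>+ y. emeasure (Q y) C \<partial>(P x))"

definition pullback :: "('a \<Rightarrow> 'b measure) \<Rightarrow> real \<Rightarrow> ('b \<times> 'c) set \<Rightarrow> ('a \<times> 'c) set" where
  "pullback P \<epsilon> S = {(x, z). measure (P x) {y. (y, z) \<in> S} \<ge> 1 - \<epsilon>}"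

end

theory Submission
  imports Defs
begin

lemma ps_em: "prob_space M \<Longrightarrow> emeasure M A = ennreal (measure M A)"
  by (simp add: finite_measure.emeasure_eq_measure prob_space.finite_measure)

lemma kcomp_emeasure:
  fixes P :: "'a::topological_space \<Rightarrow> 'b::topological_space measure"
    and Q :: "'b \<Rightarrow> 'c::topological_space measure"
  assumes P: "markov_kernel P" and Q: "markov_kernel Q" and C: "C \<in> sets borel"
  shows "emeasure (kcomp Q P x) C = (\<integral>\<^sup>+ y. emeasure (Q y) C \<partial>(P x))"
proof -
  have ps: "\<And>y. prob_space (Q y)" and sQ: "\<And>y. sets (Q y) = sets borel"
    using Q unfolding markov_kernel_def by auto
  have sP: "sets (P x) = sets borel" using P unfolding markov_kernel_def by auto
  have meas: "(\<lambda>y. emeasure (Q y) A) \<in> borel_measurable (P x)" if "A \<in> sets borel" for A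
  proof -
    have "(\<lambda>y. measure (Q y) A) \<in> borel_measurable borel" using Q that unfolding markov_kernel_def by auto
    then have "(\<lambda>y. ennreal (measure (Q y) A)) \<in> borel_measurable borel" by measurable
    moreover have "(\<lambda>y. emeasure (Q y) A) = (\<lambda>y. ennreal (measure (Q y) A))"
      using ps by (simp add: ps_em)
    moreover have "(\<lambda>y. ennreal (measure (Q y) A)) \<in> borel_measurable (P x)"
      using calculation(1) by (subst measurable_cong_sets[OF sP refl])
    ultimately show ?thesis by simp
  qed
  have sa: "sigma_algebra UNIV (sets borel)"
    by (metis sets.sigma_algebra_axioms space_borel)
  have pos: "positive (sets borel) (\<lambda>C. \<integral>\<^sup>+ y. emeasure (Q y) C \<partial>(P x))"
    unfolding positive_def by simp
  have ca: "countably_additive (sets borel) (\<lambda>C. \<integral>\<^sup>+ y. emeasure (Q y) C \<partial>(P x))"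
    unfolding countably_additive_def
  proof (intro allI impI)
    fix A :: "nat \<Rightarrow> 'c set"
    assume A: "range A \<subseteq> sets borel" "disjoint_family A" "\<Union> (range A) \<in> sets borel"
    have "(\<Sum>i. \<integral>\<^sup>+ y. emeasure (Q y) (A i) \<partial>(P x)) = (\<integral>\<^sup>+ y. (\<Sum>i. emeasure (Q y) (A i)) \<partial>(P x))"
      by (rule nn_integral_suminf[symmetric]) (use A meas in auto)
    also have "\<dots> = (\<integral>\<^sup>+ y. emeasure (Q y) (\<Union> (range A)) \<partial>(P x))"
      apply (rule nn_integral_cong)
      apply (rule suminf_emeasure)
      using A sQ by auto
    finally show "(\<Sum>i. \<integral>\<^sup>+ y. emeasure (Q y) (A i) \<partial>(P x)) = (\<integral>\<^sup>+ y. emeasure (Q y) (\<Union> (range A)) \<partial>(P x))" .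
  qed
  show ?thesis unfolding kcomp_def
    by (rule emeasure_measure_of_sigma[OF sa pos ca C])
qed

theorem mainTheorem15:
  fixes P :: "'x::polish_space \<Rightarrow> 'y::polish_space measure"
    and Q :: "'y \<Rightarrow> 'z::polish_space measure"
    and S :: "('z \<times> 'w::polish_space) set"
    and \<delta> \<epsilon> :: real
  assumes "markov_kernel P" "feller P" "tight_kernel P"
    and "markov_kernel Q" "feller Q" "tight_kernel Q"
    and "closed S"
    and "\<delta> \<ge> 0" "\<epsilon> \<ge> 0" "\<delta> + \<epsilon> < 1"
  shows "pullback P \<delta> (pullback Q \<epsilon> S) \<subseteq> pullback (kcomp Q P) (\<delta> + \<epsilon>) S"
proof (clarsimp simp: pullback_def)
  fix x w
  assume H: "1 - \<delta> \<le> measure (P x) {y. 1 - \<epsilon> \<le> measure (Q y) {z. (z, w) \<in> S}}"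
  define C where "C = {z. (z, w) \<in> S}"
  define A where "A = {y. 1 - \<epsilon> \<le> measure (Q y) C}"
  have psQ: "\<And>y. prob_space (Q y)" and sQ: "\<And>y. sets (Q y) = sets borel"
    and psP: "prob_space (P x)" and sP: "sets (P x) = sets borel"
    using assms(1,4) unfolding markov_kernel_def by auto
  have "C = (\<lambda>z. (z, w)) -` S" unfolding C_def by auto
  moreover have "continuous_on UNIV (\<lambda>z::'z. (z, w))" by (intro continuous_intros)
  ultimately have "closed C" using closed_vimage[OF assms(7)] by metis
  then have Cb: "C \<in> sets borel" by simp
  have fm: "(\<lambda>y. measure (Q y) C) \<in> borel_measurable borel"
    using assms(4) Cb unfolding markov_kernel_def by auto
  have "A = (\<lambda>y. measure (Q y) C) -` {1 - \<epsilon>..} \<inter> space borel" unfolding A_def by auto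
  then have Ab: "A \<in> sets borel" using measurable_sets[OF fm, of "{1 - \<epsilon>..}"] by simp
  have AP: "A \<in> sets (P x)" using Ab sP by simp
  have e: "emeasure (kcomp Q P x) C = (\<integral>\<^sup>+ y. emeasure (Q y) C \<partial>(P x))"
    by (rule kcomp_emeasure[OF assms(1,4) Cb])
  have "(\<integral>\<^sup>+ y. ennreal (1 - \<epsilon>) * indicator A y \<partial>(P x)) \<le> (\<integral>\<^sup>+ y. emeasure (Q y) C \<partial>(P x))"
  proof (rule nn_integral_mono)
    fix y
    show "ennreal (1 - \<epsilon>) * indicator A y \<le> emeasure (Q y) C"
      using ps_em[OF psQ] by (auto simp: A_def indicator_def)
  qed
  moreover have "(\<integral>\<^sup>+ y. ennreal (1 - \<epsilon>) * indicator A y \<partial>(P x)) = ennreal (1 - \<epsilon>) * emeasure (P x) A"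
    using AP by (simp add: nn_integral_cmult_indicator)
  moreover have "emeasure (P x) A = ennreal (measure (P x) A)"
    using ps_em[OF psP] by simp
  moreover have "(\<integral>\<^sup>+ y. emeasure (Q y) C \<partial>(P x)) \<le> 1"
  proof -
    have "(\<integral>\<^sup>+ y. emeasure (Q y) C \<partial>(P x)) \<le> (\<integral>\<^sup>+ y. 1 \<partial>(P x))"
      by (rule nn_integral_mono) (simp add: prob_space.emeasure_le_1[OF psQ])
    also have "\<dots> = 1" using prob_space.emeasure_space_1[OF psP] by simp
    finally show ?thesis .
  qed
  ultimately have L0: "ennreal (1 - \<epsilon>) * ennreal (measure (P x) A) \<le> emeasure (kcomp Q P x) C"
    and U: "emeasure (kcomp Q P x) C \<le> 1"
    using e by simp_all
  have L: "ennreal ((1 - \<epsilon>) * measure (P x) A) \<le> emeasure (kcomp Q P x) C"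
    using L0 assms(8-10) by (simp add: ennreal_mult)
  have fin: "emeasure (kcomp Q P x) C < top"
    using U ennreal_one_less_top by (rule le_less_trans)
  have "measure (kcomp Q P x) C = enn2real (emeasure (kcomp Q P x) C)" by (simp add: measure_def)
  moreover have "(1 - \<epsilon>) * measure (P x) A \<le> enn2real (emeasure (kcomp Q P x) C)"
  proof -
    have "enn2real (ennreal ((1 - \<epsilon>) * measure (P x) A)) \<le> enn2real (emeasure (kcomp Q P x) C)"
      by (rule enn2real_mono[OF L fin])
    moreover have "(1 - \<epsilon>) * measure (P x) A \<ge> 0" using assms(8-10) by simp
    ultimately show ?thesis by simp
  qed
  moreover have "1 - (\<delta> + \<epsilon>) \<le> (1 - \<epsilon>) * measure (P x) A"
  proof -
    have "1 - \<delta> \<le> measure (P x) A" using H by (simp add: A_def C_def)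
    then have "(1 - \<epsilon>) * (1 - \<delta>) \<le> (1 - \<epsilon>) * measure (P x) A"
      using assms(8-10) by (intro mult_left_mono) auto
    moreover have "1 - (\<delta> + \<epsilon>) \<le> (1 - \<epsilon>) * (1 - \<delta>)" using assms(8,9)
      by (simp add: algebra_simps)
    ultimately show ?thesis by linarith
  qed
  ultimately show "1 - (\<delta> + \<epsilon>) \<le> measure (kcomp Q P x) {z. (z, w) \<in> S}"
    by (simp add: C_def)
qed

end
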